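(* Let $A=2^\omega$, the set of subsets of $\omega$, partially ordered by inclusion, and let $U_\subseteq(A)\subseteq 2^A$ be its set of up-sets. For each $n\in\omega$ let $e_n\in U_\subseteq(A)$ be the set of subsets of $\omega$ containing $n$. Then for $x\in U_\subseteq(A)$ the following are equivalent: (i) $x$ is an isolated point of $U_\subseteq(A)$ in the topology induced by the natural topology on $2^A$; (ii) $x$ is both the union of a finite (possibly empty) family of principal up-sets of $A$ and the intersection of a finite (possibly empty) family of complements of principal down-sets of $A$; (iii) $x$ lies in the closure of $\{e_n\mid n\in\omega\}\cup\{\emptyset,A\}$ under pairwise unions and intersections.
   Context: An up-set of a poset is a subset closed upward; ${\uparrow}(a)=\{b\mid b\supseteq a\}$ and ${\downarrow}(a)=\{b\mid b\subseteq a\}$ are the principal up-set and principal down-set determined by $a\in A$; complements are in $A$. The natural topology on $2^A$ (the set of subsets of $A$) is the product topology of copies of the discrete space $\{0,1\}$, with subbasis the sets $\{x\mid a\in x\}$ and $\{x\mid a\notin x\}$ for $a\in A$. *)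

theory Defs
  imports "HOL-Analysis.Analysis"
begin

definition natural_topology :: "'a set topology" where
  "natural_topology =
     topology_generated_by ({{x. a \<in> x} | a. True} \<union> {{x. a \<notin> x} | a. True})"

definition upsets :: "nat set set set" where
  "upsets = {x. \<forall>a b. a \<in> x \<and> a \<subseteq> b \<longrightarrow> b \<in> x}"

definition up :: "nat set \<Rightarrow> nat set set" where
  "up a = {b. a \<subseteq> b}"

definition down :: "nat set \<Rightarrow> nat set set" where
  "down a = {b. b \<subseteq> a}"

definition e :: "nat \<Rightarrow> nat set set" where
  "e n = {a. n \<in> a}"

inductive_set lattice_gen :: "nat set set set" where
  gen_e: "e n \<in> lattice_gen"
| gen_empty: "{} \<in> lattice_gen"
| gen_univ: "UNIV \<in> lattice_gen"
| gen_un: "x \<in> lattice_gen \<Longrightarrow> y \<in> lattice_gen \<Longrightarrow> x \<union> y \<in> lattice_gen"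
| gen_int: "x \<in> lattice_gen \<Longrightarrow> y \<in> lattice_gen \<Longrightarrow> x \<inter> y \<in> lattice_gen"

end

theory Submission
  imports Defs
begin

definition nbhd :: "nat set set \<Rightarrow> nat set set \<Rightarrow> nat set set set" where
  "nbhd A B = {y. A \<subseteq> y \<and> B \<inter> y = {}}"

lemma topspace_nat: "topspace natural_topology = UNIV"
  unfolding natural_topology_def by auto

lemma nbhd_open:
  assumes "finite A" "finite B"
  shows "openin natural_topology (nbhd A B)"
  using assms(1)
proof (induction A rule: finite_induct)
  case empty
  show ?case using assms(2)
  proof (induction B rule: finite_induct)
    case empty
    have "nbhd {} {} = topspace natural_topology" by (auto simp: topspace_nat nbhd_def)
    then show ?case by simp
  next
    case (insert b B)
    have "nbhd {} (insert b B) = nbhd {} B \<inter> {x. b \<notin> x}" by (auto simp: nbhd_def)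
    moreover have "openin natural_topology {x. b \<notin> x}"
      unfolding natural_topology_def by (rule topology_generated_by_Basis) blast
    ultimately show ?case using insert by auto
  qed
next
  case (insert a A)
  have "nbhd (insert a A) B = nbhd A B \<inter> {x. a \<in> x}" by (auto simp: nbhd_def)
  moreover have "openin natural_topology {x. a \<in> x}"
    unfolding natural_topology_def by (rule topology_generated_by_Basis) blast
  ultimately show ?case using insert by auto
qed

lemma gen_nbhd:
  assumes "generate_topology_on S U"
    and "\<And>s p. s \<in> S \<Longrightarrow> p \<in> s \<Longrightarrow> \<exists>A B. finite A \<and> finite B \<and> p \<in> nbhd A B \<and> nbhd A B \<subseteq> s"
  shows "\<forall>p\<in>U. \<exists>A B. finite A \<and> finite B \<and> p \<in> nbhd A B \<and> nbhd A B \<subseteq> U"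
  using assms(1)
proof (induction rule: generate_topology_on.induct)
  case Empty
  show ?case by simp
next
  case (Int a b)
  show ?case
  proof
    fix p assume p: "p \<in> a \<inter> b"
    from Int.IH(1) p obtain A B where AB: "finite A" "finite B" "p \<in> nbhd A B" "nbhd A B \<subseteq> a"
      by blast
    from Int.IH(2) p obtain A' B' where AB': "finite A'" "finite B'" "p \<in> nbhd A' B'" "nbhd A' B' \<subseteq> b"
      by blast
    have "p \<in> nbhd (A \<union> A') (B \<union> B')" using AB(3) AB'(3) by (auto simp: nbhd_def)
    moreover have "nbhd (A \<union> A') (B \<union> B') \<subseteq> nbhd A B" "nbhd (A \<union> A') (B \<union> B') \<subseteq> nbhd A' B'"
      by (auto simp: nbhd_def)
    then have "nbhd (A \<union> A') (B \<union> B') \<subseteq> a \<inter> b"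
      using AB(4) AB'(4) by (meson Int_greatest order_trans)
    moreover have "finite (A \<union> A')" "finite (B \<union> B')" using AB AB' by auto
    ultimately show "\<exists>A B. finite A \<and> finite B \<and> p \<in> nbhd A B \<and> nbhd A B \<subseteq> a \<inter> b"
      by (intro exI[of _ "A \<union> A'"] exI[of _ "B \<union> B'"] conjI)
  qed
next
  case (UN K)
  show ?case
  proof
    fix p assume "p \<in> \<Union>K"
    then obtain k where k: "k \<in> K" "p \<in> k" by blast
    then obtain A B where "finite A" "finite B" "p \<in> nbhd A B" "nbhd A B \<subseteq> k"
      using UN.IH by blast
    moreover have "nbhd A B \<subseteq> \<Union>K" using calculation(4) k(1) by blast
    ultimately show "\<exists>A B. finite A \<and> finite B \<and> p \<in> nbhd A B \<and> nbhd A B \<subseteq> \<Union>K" by blast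
  qed
next
  case (Basis s)
  show ?case
  proof
    fix p assume "p \<in> s"
    then show "\<exists>A B. finite A \<and> finite B \<and> p \<in> nbhd A B \<and> nbhd A B \<subseteq> s"
      using assms(2)[OF Basis(1)] by blast
  qed
qed

lemma basis_nbhd:
  assumes "s \<in> ({{x. a \<in> x} | a. True} \<union> {{x. a \<notin> x} | a. True})" "p \<in> s"
  shows "\<exists>A B. finite A \<and> finite B \<and> p \<in> nbhd A B \<and> nbhd A B \<subseteq> s"
proof -
    from assms(1) consider a where "s = {x. a \<in> x}" | a where "s = {x. a \<notin> x}"
      unfolding Un_iff mem_Collect_eq by (elim disjE exE conjE) simp_all
    then show ?thesis
    proof cases
      case (1 a)
      have "p \<in> nbhd {a} {}" "nbhd {a} {} \<subseteq> s" using 1 assms(2) by (auto simp: nbhd_def)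
      then show ?thesis by blast
    next
      case (2 a)
      have "p \<in> nbhd {} {a}" "nbhd {} {a} \<subseteq> s" using 2 assms(2) by (auto simp: nbhd_def)
      then show ?thesis by blast
    qed
qed


lemma upsetD: "x \<in> upsets \<Longrightarrow> a \<in> x \<Longrightarrow> a \<subseteq> b \<Longrightarrow> b \<in> x"
  unfolding upsets_def by blast

lemma isolated_iff:
  assumes x: "x \<in> upsets"
  shows "openin (subtopology natural_topology upsets) {x}
            \<longleftrightarrow> ((\<exists>F. finite F \<and> x = (\<Union>a\<in>F. up a))
                 \<and> (\<exists>G. finite G \<and> x = (\<Inter>b\<in>G. - down b)))"
proof
  assume "openin (subtopology natural_topology upsets) {x}"
  then obtain U where U: "openin natural_topology U" "{x} = U \<inter> upsets"
    by (auto simp: openin_subtopology)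
  then have "generate_topology_on ({{x. a \<in> x} | a. True} \<union> {{x. a \<notin> x} | a. True}) U"
    unfolding natural_topology_def by (simp add: openin_topology_generated_by_iff)
  from gen_nbhd[OF this basis_nbhd] U(2) obtain A B where AB: "finite A" "finite B" "x \<in> nbhd A B"
     "nbhd A B \<subseteq> U" by blast
  have uniq: "y = x" if "y \<in> upsets" "A \<subseteq> y" "B \<inter> y = {}" for y
  proof -
    have "y \<in> nbhd A B" using that by (simp add: nbhd_def)
    then have "y \<in> U \<inter> upsets" using AB(4) that(1) by blast
    then have "y \<in> {x}" by (simp only: U(2))
    then show ?thesis by simp
  qed
  have Ax: "A \<subseteq> x" and Bx: "B \<inter> x = {}" using AB(3) by (auto simp: nbhd_def)
  have "x = (\<Union>a\<in>A. up a)"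
  proof (rule sym, rule uniq)
    show "(\<Union>a\<in>A. up a) \<in> upsets" by (auto simp: upsets_def up_def)
    show "A \<subseteq> (\<Union>a\<in>A. up a)" by (auto simp: up_def)
    show "B \<inter> (\<Union>a\<in>A. up a) = {}"
      using Ax Bx upsetD[OF x] by (auto simp: up_def)
  qed
  moreover have "x = (\<Inter>b\<in>B. - down b)"
  proof (rule sym, rule uniq)
    show "(\<Inter>b\<in>B. - down b) \<in> upsets" by (auto simp: upsets_def down_def)
    show "A \<subseteq> (\<Inter>b\<in>B. - down b)"
      using Ax Bx upsetD[OF x] by (auto simp: down_def)
    show "B \<inter> (\<Inter>b\<in>B. - down b) = {}" by (auto simp: down_def)
  qed
  ultimately show "(\<exists>F. finite F \<and> x = (\<Union>a\<in>F. up a)) \<and> (\<exists>G. finite G \<and> x = (\<Inter>b\<in>G. - down b))"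
    using AB by blast
next
  assume "(\<exists>F. finite F \<and> x = (\<Union>a\<in>F. up a)) \<and> (\<exists>G. finite G \<and> x = (\<Inter>b\<in>G. - down b))"
  then obtain F G where FG: "finite F" "x = (\<Union>a\<in>F. up a)" "finite G" "x = (\<Inter>b\<in>G. - down b)"
    by blast
  have "{x} = nbhd F G \<inter> upsets"
  proof (intro equalityI subsetI)
    fix y assume "y \<in> {x}"
    then show "y \<in> nbhd F G \<inter> upsets" using x FG
      by (auto simp: nbhd_def up_def down_def)
  next
    fix y assume y: "y \<in> nbhd F G \<inter> upsets"
    have "x \<subseteq> y" using y FG(2) by (auto simp: nbhd_def up_def upsets_def)
    moreover have "y \<subseteq> x"
    proof
      fix c assume c: "c \<in> y"
      { fix b assume "b \<in> G" "c \<subseteq> b"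
        then have "b \<in> y" using c y by (auto simp: upsets_def)
        then have False using \<open>b \<in> G\<close> y by (auto simp: nbhd_def) }
      then show "c \<in> x" using FG(4) by (auto simp: down_def)
    qed
    ultimately show "y \<in> {x}" by auto
  qed
  then show "openin (subtopology natural_topology upsets) {x}"
    using nbhd_open[OF FG(1,3)] by (auto simp: openin_subtopology)
qed


lemma up_gen: "finite s \<Longrightarrow> up s \<in> lattice_gen"
proof (induction s rule: finite_induct)
  case empty
  have "up {} = UNIV" by (auto simp: up_def)
  then show ?case using gen_univ by simp
next
  case (insert n s)
  have "up (insert n s) = e n \<inter> up s" by (auto simp: up_def e_def)
  then show ?case using insert gen_int gen_e by simp
qed

lemma union_gen: "finite F \<Longrightarrow> (\<And>a. a \<in> F \<Longrightarrow> f a \<in> lattice_gen) \<Longrightarrow> (\<Union>a\<in>F. f a) \<in> lattice_gen"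
proof (induction F rule: finite_induct)
  case empty
  then show ?case using gen_empty by simp
next
  case (insert a F)
  then show ?case using gen_un by simp
qed

lemma to_gen:
  assumes F: "finite F" "x = (\<Union>a\<in>F. up a)" and G: "finite G" "x = (\<Inter>b\<in>G. - down b)"
  shows "x \<in> lattice_gen"
proof -
  define a' where "a' a = (\<lambda>b. SOME n. n \<in> a \<and> n \<notin> b) ` G" for a
  have ex: "\<exists>n. n \<in> a \<and> n \<notin> b" if "a \<in> F" "b \<in> G" for a b
  proof -
    have "a \<in> x" using F that(1) by (auto simp: up_def)
    then have "\<not> a \<subseteq> b" using G that(2) by (auto simp: down_def)
    then show ?thesis by blast
  qed
  have sub: "a' a \<subseteq> a" if "a \<in> F" for a
  proof
    fix n assume "n \<in> a' a"
    then obtain b where b: "b \<in> G" "n = (SOME n. n \<in> a \<and> n \<notin> b)" by (auto simp: a'_def)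
    show "n \<in> a" using someI_ex[OF ex[OF that b(1)]] b(2) by simp
  qed
  have ina: "a' a \<in> x" if "a \<in> F" for a
  proof -
    have "\<not> a' a \<subseteq> b" if b: "b \<in> G" for b
    proof -
      have "(SOME n. n \<in> a \<and> n \<notin> b) \<in> a' a" using b by (auto simp: a'_def)
      moreover have "(SOME n. n \<in> a \<and> n \<notin> b) \<notin> b" using someI_ex[OF ex[OF \<open>a \<in> F\<close> b]] by simp
      ultimately show ?thesis by blast
    qed
    then show ?thesis using G by (auto simp: down_def)
  qed
  have upx: "up (a' a) \<subseteq> x" if "a \<in> F" for a
  proof
    fix z assume z: "z \<in> up (a' a)"
    have "\<not> z \<subseteq> b" if "b \<in> G" for b
      using ina[OF \<open>a \<in> F\<close>] G that z by (auto simp: down_def up_def)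
    then show "z \<in> x" using G by (auto simp: down_def)
  qed
  have "x = (\<Union>a\<in>F. up (a' a))"
  proof
    show "x \<subseteq> (\<Union>a\<in>F. up (a' a))"
    proof
      fix z assume "z \<in> x"
      then obtain a where "a \<in> F" "z \<in> up a" using F by blast
      then show "z \<in> (\<Union>a\<in>F. up (a' a))" using sub[of a] by (auto simp: up_def)
    qed
    show "(\<Union>a\<in>F. up (a' a)) \<subseteq> x" using upx by blast
  qed
  moreover have "(\<Union>a\<in>F. up (a' a)) \<in> lattice_gen"
    using F(1) by (rule union_gen) (simp add: up_gen a'_def G(1))
  ultimately show ?thesis by simp
qed

lemma un_down: "(\<Inter>b\<in>G. - down b) \<union> (\<Inter>b\<in>G'. - down b) = (\<Inter>b\<in>(\<lambda>(b,c). b \<inter> c) ` (G \<times> G'). - down b)"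
  by (auto simp: down_def)

definition PP :: "nat set set \<Rightarrow> bool" where
  "PP x \<longleftrightarrow> (\<exists>F. finite F \<and> x = (\<Union>a\<in>F. up a)) \<and> (\<exists>G. finite G \<and> x = (\<Inter>b\<in>G. - down b))"

lemma gen_PP: "x \<in> lattice_gen \<Longrightarrow> PP x"
proof (induction rule: lattice_gen.induct)
  case (gen_e n)
  have "e n = (\<Union>a\<in>{{n}}. up a)" by (auto simp: up_def e_def)
  moreover have "e n = (\<Inter>b\<in>{- {n}}. - down b)" by (auto simp: down_def e_def)
  ultimately show ?case unfolding PP_def by blast
next
  case gen_empty
  have "{} = (\<Union>a\<in>{}. up a)" by simp
  moreover have "{} = (\<Inter>b\<in>{UNIV}. - down b)" by (auto simp: down_def)
  ultimately show ?case unfolding PP_def by blast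
next
  case gen_univ
  have "UNIV = (\<Union>a\<in>{{}}. up a)" by (auto simp: up_def)
  moreover have "UNIV = (\<Inter>b\<in>{}. - down b)" by simp
  ultimately show ?case unfolding PP_def by blast
next
  case (gen_un x y)
  obtain F G F' G' where a: "finite F" "x = (\<Union>a\<in>F. up a)" "finite G" "x = (\<Inter>b\<in>G. - down b)"
    "finite F'" "y = (\<Union>a\<in>F'. up a)" "finite G'" "y = (\<Inter>b\<in>G'. - down b)"
    using gen_un.IH unfolding PP_def by blast
  have "x \<union> y = (\<Union>a\<in>F \<union> F'. up a)" using a by auto
  moreover have "x \<union> y = (\<Inter>b\<in>(\<lambda>(b,c). b \<inter> c) ` (G \<times> G'). - down b)"
    using un_down a(4,8) by simp
  moreover have "finite ((\<lambda>(b,c). b \<inter> c) ` (G \<times> G'))" using a by simp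
  ultimately show ?case unfolding PP_def using a by blast
next
  case (gen_int x y)
  obtain F G F' G' where a: "finite F" "x = (\<Union>a\<in>F. up a)" "finite G" "x = (\<Inter>b\<in>G. - down b)"
    "finite F'" "y = (\<Union>a\<in>F'. up a)" "finite G'" "y = (\<Inter>b\<in>G'. - down b)"
    using gen_int.IH unfolding PP_def by blast
  have "x \<inter> y = (\<Inter>b\<in>G \<union> G'. - down b)" using a by auto
  moreover have "x \<inter> y = (\<Union>a\<in>(\<lambda>(a,c). a \<union> c) ` (F \<times> F'). up a)"
    using a by (auto simp: up_def)
  moreover have "finite ((\<lambda>(a,c). a \<union> c) ` (F \<times> F'))" using a by simp
  ultimately show ?case unfolding PP_def using a by blast
qed


theorem corollary5p2:
  assumes "x \<in> upsets"
  shows "(openin (subtopology natural_topology upsets) {x}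
            \<longleftrightarrow> ((\<exists>F. finite F \<and> x = (\<Union>a\<in>F. up a))
                 \<and> (\<exists>G. finite G \<and> x = (\<Inter>b\<in>G. - down b))))
       \<and> (((\<exists>F. finite F \<and> x = (\<Union>a\<in>F. up a))
                 \<and> (\<exists>G. finite G \<and> x = (\<Inter>b\<in>G. - down b)))
            \<longleftrightarrow> x \<in> lattice_gen)"
proof
  show "openin (subtopology natural_topology upsets) {x}
            \<longleftrightarrow> ((\<exists>F. finite F \<and> x = (\<Union>a\<in>F. up a))
                 \<and> (\<exists>G. finite G \<and> x = (\<Inter>b\<in>G. - down b)))"
    by (rule isolated_iff[OF assms])
  show "((\<exists>F. finite F \<and> x = (\<Union>a\<in>F. up a))
                 \<and> (\<exists>G. finite G \<and> x = (\<Inter>b\<in>G. - down b)))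
            \<longleftrightarrow> x \<in> lattice_gen"
    using gen_PP[of x] to_gen[of _ x] unfolding PP_def by blast
qed

end
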